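(* Let $X \to Y$ be a relative cell complex in $\mathbf{PsTop}$. Then every compact subset $C$ of $Y$ intersects the interiors of only finitely many cells of $Y - X$.
   Context: A convergence space is a set with a relation between filters and points ($\lambda\to x$) such that $\lambda\to x$, $\lambda\subseteq\lambda'$ imply $\lambda'\to x$, and $\dot x\to x$; it is pseudotopological iff $\lambda\to x$ exactly when every ultrafilter containing $\lambda$ converges to $x$. Continuous maps: $\lambda\to x$ implies $f(\lambda)\to f(x)$. $\mathbf{PsTop}$ is the category of pseudotopological spaces; topological spaces (in particular $D^n$, $S^{n-1}$) are regarded as pseudotopological by $\lambda\to x$ iff $\lambda$ contains the neighbourhood filter of $x$; subspaces carry the induced structure ($\lambda\to x$ in $U$ iff the filter generated in $X$ converges to $x$), and colimits carry final structures in $\mathbf{PsTop}$. A subset is compact iff, with its subspace structure, every ultrafilter on it converges. $Y$ is obtained from $X$ by attaching a cell if $X$ is a subspace of $Y$ and there is a pushout square in $\mathbf{PsTop}$ with $S^{n-1}\to X$, $S^{n-1}\hookrightarrow D^n$, $D^n \to Y$, $X \to Y$, for some $n\geq 0$ ($S^{-1}=\emptyset$, $D^0$ a point). A continuous map $f : X \to Y$ is a relative cell complex if it is an inclusion and $Y$ is constructed from $X$ by a (possibly transfinite) sequence of cell attachments (with colimits at limit stages). The interior of a cell is the image of $D^n\setminus S^{n-1}$ in $Y$; the cells of $Y - X$ are those attached in this construction. *)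

theory Defs
  imports "HOL-Analysis.Analysis"
begin

text \<open>Convergence spaces are represented on a carrier set inside an ambient type:
  a pair (S, c) where c F x means "the (proper) filter F on S converges to x".
  Filters are HOL filters on the ambient type; "F is a filter on S" means S is in F.
  "lambda subset of lambda'" (as sets of sets) is written F' <= F in HOL's filter order.\<close>

type_synonym 'a cspace = "'a set \<times> ('a filter \<Rightarrow> 'a \<Rightarrow> bool)"

definition pts :: "'a cspace \<Rightarrow> 'a set" where "pts X = fst X"
definition cv :: "'a cspace \<Rightarrow> 'a filter \<Rightarrow> 'a \<Rightarrow> bool" where "cv X = snd X"

definition is_ultrafilter :: "'a filter \<Rightarrow> bool" where
  "is_ultrafilter U \<longleftrightarrow> U \<noteq> bot \<and>
     (\<forall>A. eventually (\<lambda>x. x \<in> A) U \<or> eventually (\<lambda>x. x \<notin> A) U)"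

definition conv_space :: "'a cspace \<Rightarrow> bool" where
  "conv_space X \<longleftrightarrow>
     (\<forall>F x. cv X F x \<longrightarrow> x \<in> pts X \<and> F \<noteq> bot \<and> eventually (\<lambda>z. z \<in> pts X) F) \<and>
     (\<forall>F G x. cv X F x \<and> G \<le> F \<and> G \<noteq> bot \<longrightarrow> cv X G x) \<and>
     (\<forall>x \<in> pts X. cv X (principal {x}) x)"

definition pseudotop :: "'a cspace \<Rightarrow> bool" where
  "pseudotop X \<longleftrightarrow> conv_space X \<and>
     (\<forall>F x. x \<in> pts X \<and> F \<noteq> bot \<and> eventually (\<lambda>z. z \<in> pts X) F \<longrightarrow>
        (cv X F x \<longleftrightarrow> (\<forall>U. is_ultrafilter U \<and> U \<le> F \<longrightarrow> cv X U x)))"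

definition cont :: "'a cspace \<Rightarrow> 'b cspace \<Rightarrow> ('a \<Rightarrow> 'b) \<Rightarrow> bool" where
  "cont X Y f \<longleftrightarrow> f ` pts X \<subseteq> pts Y \<and>
     (\<forall>F x. cv X F x \<longrightarrow> cv Y (filtermap f F) (f x))"

definition top_cspace :: "'a topology \<Rightarrow> 'a cspace" where
  "top_cspace T = (topspace T, \<lambda>F x. x \<in> topspace T \<and> F \<noteq> bot \<and>
      eventually (\<lambda>z. z \<in> topspace T) F \<and>
      (\<forall>U. openin T U \<and> x \<in> U \<longrightarrow> eventually (\<lambda>z. z \<in> U) F))"

text \<open>Euclidean n-disc and (n-1)-sphere, as subsets of finitely supported real
  sequences (coordinates \<ge> n vanish), with the Euclidean (= product) topology.
  For n = 0 the disc is a point and the sphere is empty.\<close>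
definition disc :: "nat \<Rightarrow> (nat \<Rightarrow> real) set" where
  "disc n = {x. (\<forall>i\<ge>n. x i = 0) \<and> (\<Sum>i<n. (x i)\<^sup>2) \<le> 1}"

definition bsphere :: "nat \<Rightarrow> (nat \<Rightarrow> real) set" where
  "bsphere n = {x. (\<forall>i\<ge>n. x i = 0) \<and> (\<Sum>i<n. (x i)\<^sup>2) = 1}"

definition Disc :: "nat \<Rightarrow> (nat \<Rightarrow> real) cspace" where
  "Disc n = top_cspace (top_of_set (disc n))"

definition Sphere :: "nat \<Rightarrow> (nat \<Rightarrow> real) cspace" where
  "Sphere n = top_cspace (top_of_set (bsphere n))"

definition subspace :: "'a cspace \<Rightarrow> 'a cspace \<Rightarrow> bool" where
  "subspace X Y \<longleftrightarrow> pts X \<subseteq> pts Y \<and>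
     (\<forall>F x. cv X F x \<longleftrightarrow> x \<in> pts X \<and> eventually (\<lambda>z. z \<in> pts X) F \<and> cv Y F x)"

text \<open>Final pseudotopological structure on T generated by a relation P, where
  P G y holds iff G is the image of a filter converging (in some source) to a
  point with image y.  This is the pseudotopological modification of the final
  convergence structure.\<close>
definition final_ps :: "'a set \<Rightarrow> ('a filter \<Rightarrow> 'a \<Rightarrow> bool) \<Rightarrow> 'a filter \<Rightarrow> 'a \<Rightarrow> bool" where
  "final_ps T P = (\<lambda>F y. y \<in> T \<and> F \<noteq> bot \<and> eventually (\<lambda>z. z \<in> T) F \<and>
     (\<forall>U. is_ultrafilter U \<and> U \<le> F \<longrightarrow> U = principal {y} \<or> (\<exists>G. P G y \<and> U \<le> G)))"

text \<open>Y is obtained from X by attaching an n-cell with attaching map phi and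
  characteristic map Phi: X is a subspace of Y and the square
  S^(n-1) -> X, S^(n-1) -> D^n, D^n -> Y, X -> Y is a pushout in PsTop, i.e.
  it commutes, the induced map from X + (D^n - S^(n-1)) to Y is bijective, and
  Y carries the final pseudotopological structure w.r.t. X -> Y and Phi.\<close>
definition attach_cell :: "'a cspace \<Rightarrow> 'a cspace \<Rightarrow> nat \<Rightarrow>
    ((nat \<Rightarrow> real) \<Rightarrow> 'a) \<Rightarrow> ((nat \<Rightarrow> real) \<Rightarrow> 'a) \<Rightarrow> bool" where
  "attach_cell X Y n phi Phi \<longleftrightarrow>
     pseudotop X \<and> pseudotop Y \<and> subspace X Y \<and>
     cont (Sphere n) X phi \<and> cont (Disc n) Y Phi \<and>
     (\<forall>s \<in> bsphere n. Phi s = phi s) \<and>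
     pts Y = pts X \<union> Phi ` disc n \<and>
     inj_on Phi (disc n - bsphere n) \<and>
     Phi ` (disc n - bsphere n) \<inter> pts X = {} \<and>
     cv Y = final_ps (pts Y)
       (\<lambda>G y. (\<exists>x. cv X G x \<and> y = x) \<or>
              (\<exists>H d. cv (Disc n) H d \<and> y = Phi d \<and> G = filtermap Phi H))"

definition is_succ_of :: "'i::wellorder \<Rightarrow> 'i \<Rightarrow> bool" where
  "is_succ_of a b \<longleftrightarrow> b < a \<and> \<not> (\<exists>d. b < d \<and> d < a)"

definition is_limit :: "'i::wellorder \<Rightarrow> bool" where
  "is_limit a \<longleftrightarrow> (\<exists>b. b < a) \<and> (\<forall>b<a. \<exists>d. b < d \<and> d < a)"

text \<open>Relative cell complex X -> Y: X is a subspace of Y, and there is a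
  transfinite sequence of spaces Ysp a (a <= g, in a well-ordered index type),
  starting at X and ending at Y, where stage succ(b) is obtained from stage b by
  attaching the cell (n b, phi b, Phi b), and limit stages are colimits
  (union with final structure w.r.t. the inclusions).\<close>
definition rel_cell_complex :: "'a cspace \<Rightarrow> 'a cspace \<Rightarrow> 'i::wellorder \<Rightarrow>
    ('i \<Rightarrow> 'a cspace) \<Rightarrow> ('i \<Rightarrow> nat) \<Rightarrow> ('i \<Rightarrow> (nat \<Rightarrow> real) \<Rightarrow> 'a) \<Rightarrow>
    ('i \<Rightarrow> (nat \<Rightarrow> real) \<Rightarrow> 'a) \<Rightarrow> bool" where
  "rel_cell_complex X Y g Ysp n phi Phi \<longleftrightarrow>
     pseudotop X \<and> pseudotop Y \<and> subspace X Y \<and>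
     Ysp g = Y \<and>
     (\<forall>a\<le>g. \<not> (\<exists>b. b < a) \<longrightarrow> Ysp a = X) \<and>
     (\<forall>a\<le>g. \<forall>b. is_succ_of a b \<longrightarrow> attach_cell (Ysp b) (Ysp a) (n b) (phi b) (Phi b)) \<and>
     (\<forall>a\<le>g. is_limit a \<longrightarrow>
        pts (Ysp a) = (\<Union>b\<in>{..<a}. pts (Ysp b)) \<and>
        cv (Ysp a) = final_ps (pts (Ysp a)) (\<lambda>G y. \<exists>b<a. cv (Ysp b) G y))"

definition cell_interior :: "nat \<Rightarrow> ((nat \<Rightarrow> real) \<Rightarrow> 'a) \<Rightarrow> 'a set" where
  "cell_interior n Phi = Phi ` (disc n - bsphere n)"

definition compact_sub :: "'a cspace \<Rightarrow> 'a set \<Rightarrow> bool" where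
  "compact_sub Y C \<longleftrightarrow> C \<subseteq> pts Y \<and>
     (\<forall>U. is_ultrafilter U \<and> eventually (\<lambda>z. z \<in> C) U \<longrightarrow> (\<exists>x\<in>C. cv Y U x))"

end

theory Submission
  imports Defs
begin


lemma closed_bsphere: "closed (bsphere n)"
proof -
  have e: "bsphere n = (\<Inter>i\<in>{n..}. {x. x i = 0}) \<inter> {x. (\<Sum>i<n. (x i)\<^sup>2) = (1::real)}"
    unfolding bsphere_def by auto
  have c: "continuous_on UNIV (\<lambda>x::nat\<Rightarrow>real. x i)" for i by simp
  show ?thesis unfolding e
    apply (intro closed_Int closed_INT ballI)
     apply (rule closed_Collect_eq) apply (rule c) apply simp
    apply (rule closed_Collect_eq) apply (intro continuous_intros c) apply simp
    done
qed

lemma ultra_max: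
  assumes "is_ultrafilter U" "G \<le> U" "G \<noteq> bot"
  shows "G = U"
proof (rule antisym)
  show "U \<le> G"
  proof (rule filter_leI)
    fix P assume "eventually P G"
    show "eventually P U"
    proof (rule ccontr)
      assume "\<not> eventually P U"
      then have "eventually (\<lambda>x. \<not> P x) U"
        using assms(1) unfolding is_ultrafilter_def
        by (metis (mono_tags, lifting) eventually_mono mem_Collect_eq)
      then have "eventually (\<lambda>x. \<not> P x) G" using assms(2) by (simp add: le_filter_def)
      with \<open>eventually P G\<close> have "eventually (\<lambda>_. False) G"
        by (auto elim: eventually_rev_mp eventually_mono)
      with assms(3) show False by (simp add: trivial_limit_def)
    qed
  qed
qed (rule assms(2))

lemma ex_ultra:
  fixes F :: "'a filter"
  assumes F: "F \<noteq> bot"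
  shows "\<exists>U\<le>F. is_ultrafilter U"
proof -
  let ?R = "{(b, a). a \<noteq> bot \<and> a \<le> b \<and> b \<le> F}"
  have bot_notin_R: "c \<in> Chains ?R \<Longrightarrow> bot \<notin> c" for c
    by (auto simp: Chains_def)
  have [simp]: "Field ?R = {G. G \<noteq> bot \<and> G \<le> F}"
    by (auto simp: Field_def bot_unique)
  have "\<exists>m\<in>Field ?R. \<forall>a\<in>Field ?R. (m, a) \<in> ?R \<longrightarrow> a = m"
  proof (rule Zorns_po_lemma)
    show "Partial_order ?R"
      by (auto simp: partial_order_on_def preorder_on_def
          antisym_def refl_on_def trans_def Field_def bot_unique)
    show "\<exists>u\<in>Field ?R. \<forall>a\<in>C. (a, u) \<in> ?R" if C: "C \<in> Chains ?R" for C
    proof (simp, intro exI conjI ballI)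
      have Inf_C: "Inf C \<noteq> bot" "Inf C \<le> F" if "C \<noteq> {}"
      proof -
        from C that have "Inf C = bot \<longleftrightarrow> (\<exists>x\<in>C. x = bot)"
          unfolding trivial_limit_def by (intro eventually_Inf_base) (auto simp: Chains_def)
        with C show "Inf C \<noteq> bot"
          by (simp add: bot_notin_R)
        from that obtain x where "x \<in> C" by auto
        with C show "Inf C \<le> F"
          by (auto intro!: Inf_lower2[of x] simp: Chains_def)
      qed
      then have [simp]: "inf F (Inf C) = (if C = {} then F else Inf C)"
        using C by (auto simp add: inf_absorb2)
      from C show "inf F (Inf C) \<noteq> bot"
        by (simp add: F Inf_C)
      from C show "inf F (Inf C) \<le> F"
        by (simp add: Chains_def Inf_C F)
      with C show "inf F (Inf C) \<le> x" "x \<le> F" if "x \<in> C" for x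
        using that  by (auto intro: Inf_lower simp: Chains_def)
    qed
  qed
  then obtain U where U: "U \<noteq> bot" "U \<le> F" and max: "\<And>G. G \<noteq> bot \<Longrightarrow> G \<le> U \<Longrightarrow> G = U"
    by auto
  have "is_ultrafilter U"
    unfolding is_ultrafilter_def
  proof (intro conjI allI U(1) disjCI)
    fix A assume "\<not> eventually (\<lambda>x. x \<notin> A) U"
    then have "inf U (principal A) \<noteq> bot"
      by (simp add: trivial_limit_def eventually_inf_principal)
    then have "inf U (principal A) = U" by (rule max) simp
    moreover have "eventually (\<lambda>x. x \<in> A) (inf U (principal A))"
      by (simp add: eventually_inf_principal)
    ultimately show "eventually (\<lambda>x. x \<in> A) U" by simp
  qed
  with U show ?thesis by auto
qed



lemma attach_step:
  assumes att: "attach_cell B A m ph Ph" and U: "is_ultrafilter U"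
    and noB: "\<And>x. \<not> cv B U x" and free: "\<And>x. eventually (\<lambda>z. z \<noteq> x) U"
    and inB: "eventually (\<lambda>z. z \<in> pts B) U"
  shows "\<not> cv A U x"
proof
  assume cvA: "cv A U x"
  from att have psB: "pseudotop B" and cont: "cont (Sphere m) B ph"
    and eqs: "\<forall>s \<in> bsphere m. Ph s = ph s"
    and disj: "Ph ` (disc m - bsphere m) \<inter> pts B = {}"
    and cvAeq: "cv A = final_ps (pts A)
       (\<lambda>G y. (\<exists>x. cv B G x \<and> y = x) \<or>
              (\<exists>H d. cv (Disc m) H d \<and> y = Ph d \<and> G = filtermap Ph H))"
    unfolding attach_cell_def by auto
  have Ubot: "U \<noteq> bot" using U unfolding is_ultrafilter_def by auto
  from cvA[unfolded cvAeq final_ps_def] U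
  have "U = principal {x} \<or> (\<exists>G. ((\<exists>x'. cv B G x' \<and> x = x') \<or>
              (\<exists>H d. cv (Disc m) H d \<and> x = Ph d \<and> G = filtermap Ph H)) \<and> U \<le> G)"
    by auto
  then show False
  proof (elim disjE exE conjE)
    assume "U = principal {x}"
    with free[of x] show False by (simp add: eventually_principal)
  next
    fix G x' assume "cv B G x'" "x = x'" "U \<le> G"
    with psB Ubot have "cv B U x" unfolding pseudotop_def conv_space_def by blast
    with noB show False by blast
  next
    fix G H d assume cvH: "cv (Disc m) H d" and "x = Ph d" and G: "G = filtermap Ph H" and UG: "U \<le> G"
    from cvH have dD: "d \<in> disc m" and
      Hop: "\<And>W. openin (top_of_set (disc m)) W \<Longrightarrow> d \<in> W \<Longrightarrow> eventually (\<lambda>z. z \<in> W) H"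
      unfolding Disc_def top_cspace_def cv_def by auto
    have K: "\<exists>z\<in>T \<inter> bsphere m. P (ph z)" if T: "open T" "d \<in> T" and P: "eventually P U" for T P
    proof -
      have oT: "openin (top_of_set (disc m)) (disc m \<inter> T)" using T by (auto simp: openin_open)
      then have "eventually (\<lambda>z. z \<in> disc m \<inter> T) H" using Hop[OF oT] dD T by simp
      then have "eventually (\<lambda>y. \<exists>z\<in>disc m \<inter> T. Ph z = y) (filtermap Ph H)"
        by (auto simp: eventually_filtermap elim: eventually_mono)
      then have "eventually (\<lambda>y. \<exists>z\<in>disc m \<inter> T. Ph z = y) U" using UG G by (simp add: le_filter_def)
      with P inB have "eventually (\<lambda>y. (\<exists>z\<in>disc m \<inter> T. Ph z = y) \<and> P y \<and> y \<in> pts B) U"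
        by (simp add: eventually_conj_iff)
      from eventually_happens'[OF Ubot this] obtain y z where
        z: "z \<in> disc m \<inter> T" "Ph z = y" "P y" "y \<in> pts B" by auto
      have "z \<in> bsphere m" using z disj by auto
      with z eqs show ?thesis by auto
    qed
    have dS: "d \<in> bsphere m"
    proof (rule ccontr)
      assume "d \<notin> bsphere m"
      then have "open (- bsphere m)" "d \<in> - bsphere m" using closed_bsphere by auto
      from K[OF this, of "\<lambda>_. True"] show False by auto
    qed
    define V where "V = inf (nhds d) (inf (principal (bsphere m)) (filtercomap ph U))"
    have Vbot: "V \<noteq> bot"
    proof
      assume "V = bot"
      then have "eventually (\<lambda>_. False) V" by simp
      then obtain Q R where Q: "eventually Q (nhds d)" and R: "eventually R (inf (principal (bsphere m)) (filtercomap ph U))"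
        and QR: "\<And>x. Q x \<Longrightarrow> R x \<Longrightarrow> False"
        unfolding V_def eventually_inf by blast
      from R obtain R1 R2 where R1: "eventually R1 (principal (bsphere m))" and R2: "eventually R2 (filtercomap ph U)"
        and RR: "\<And>x. R1 x \<Longrightarrow> R2 x \<Longrightarrow> R x"
        unfolding eventually_inf by blast
      from Q obtain T where T: "open T" "d \<in> T" "\<And>x. x \<in> T \<Longrightarrow> Q x" unfolding eventually_nhds by blast
      from R2 obtain Q' where Q': "eventually Q' U" "\<And>x. Q' (ph x) \<Longrightarrow> R2 x"
        by (auto simp: eventually_filtercomap)
      from K[OF T(1,2) Q'(1)] Q'(2) obtain z where "z \<in> T" "z \<in> bsphere m" "R2 z" by auto
      with R1 T(3) RR QR show False by (auto simp: eventually_principal)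
    qed
    have cvV: "cv (Sphere m) V d"
      unfolding Sphere_def top_cspace_def cv_def
    proof (simp, intro conjI allI impI dS Vbot)
      have "V \<le> principal (bsphere m)" unfolding V_def by (intro le_infI2 le_infI1 order_refl)
      then show "eventually (\<lambda>z. z \<in> bsphere m) V" by (simp add: le_principal)
      fix W assume W: "openin (top_of_set (bsphere m)) W \<and> d \<in> W"
      then obtain T where T: "open T" "W = bsphere m \<inter> T" by (auto simp: openin_open)
      have "nhds d \<le> principal T" using T W by (auto simp: le_principal eventually_nhds)
      then have "V \<le> principal T" unfolding V_def by (rule le_infI1)
      with \<open>V \<le> principal (bsphere m)\<close> show "eventually (\<lambda>z. z \<in> W) V"
        using T by (simp add: le_principal eventually_conj)
    qed
    from cont cvV have cvB: "cv B (filtermap ph V) (ph d)" unfolding cont_def by blast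
    have "filtermap ph V \<le> U"
    proof (rule filter_leI)
      fix P assume "eventually P U"
      then have "eventually (\<lambda>x. P (ph x)) (filtercomap ph U)" by (auto simp add: eventually_filtercomap)
      moreover have "V \<le> filtercomap ph U" unfolding V_def by (intro le_infI2 order_refl)
      ultimately show "eventually P (filtermap ph V)" by (simp add: eventually_filtermap le_filter_def)
    qed
    then have "filtermap ph V = U" using ultra_max[OF U] Vbot by (simp add: filtermap_bot_iff)
    with cvB noB show False by simp
  qed
qed



lemma eventually_inf_principal_imp_lemma:
  "eventually P F \<Longrightarrow> eventually P (inf F (principal S))"
  by (simp add: eventually_inf_principal eventually_mono)

lemma cv_pts: "pseudotop Z \<Longrightarrow> cv Z F x \<Longrightarrow> eventually (\<lambda>z. z \<in> pts Z) F"
  unfolding pseudotop_def conv_space_def by blast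

lemma cv_mono: "pseudotop Z \<Longrightarrow> cv Z F x \<Longrightarrow> G \<le> F \<Longrightarrow> G \<noteq> bot \<Longrightarrow> cv Z G x"
  unfolding pseudotop_def conv_space_def by blast

theorem mainTheorem8:
  fixes X Y :: "'a cspace" and g :: "'i::wellorder" and Ysp :: "'i \<Rightarrow> 'a cspace"
    and n :: "'i \<Rightarrow> nat" and phi Phi :: "'i \<Rightarrow> (nat \<Rightarrow> real) \<Rightarrow> 'a" and C :: "'a set"
  assumes "rel_cell_complex X Y g Ysp n phi Phi"
    and "compact_sub Y C"
  shows "finite {b. b < g \<and> C \<inter> cell_interior (n b) (Phi b) \<noteq> {}}"
proof -
  from assms(1) have psX: "pseudotop X" and Yg: "Ysp g = Y"
    and base: "\<And>a. a \<le> g \<Longrightarrow> \<not> (\<exists>b. b < a) \<Longrightarrow> Ysp a = X"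
    and succ: "\<And>a b. a \<le> g \<Longrightarrow> is_succ_of a b \<Longrightarrow> attach_cell (Ysp b) (Ysp a) (n b) (phi b) (Phi b)"
    and lim: "\<And>a. a \<le> g \<Longrightarrow> is_limit a \<Longrightarrow>
        pts (Ysp a) = (\<Union>b\<in>{..<a}. pts (Ysp b)) \<and>
        cv (Ysp a) = final_ps (pts (Ysp a)) (\<lambda>G y. \<exists>b<a. cv (Ysp b) G y)"
    unfolding rel_cell_complex_def by auto
  have succ_ex: "\<exists>a\<le>g. is_succ_of a b" if "b < g" for b
  proof -
    define a where "a = (LEAST a. b < a)"
    have "b < a" unfolding a_def by (rule LeastI) (rule that)
    moreover have "a \<le> g" unfolding a_def by (rule Least_le) (rule that)
    moreover have "\<not> (b < d \<and> d < a)" for d using not_less_Least[of d "\<lambda>a. b < a"] a_def by auto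
    ultimately show ?thesis unfolding is_succ_of_def by auto
  qed
  have att: "\<exists>a\<le>g. is_succ_of a b \<and> attach_cell (Ysp b) (Ysp a) (n b) (phi b) (Phi b)" if "b < g" for b
    using succ_ex[OF that] succ by blast
  have ps: "pseudotop (Ysp b)" if "b < g" for b
    using att[OF that] unfolding attach_cell_def by auto
  have trich: "\<not> (\<exists>b. b < a) \<or> (\<exists>b. is_succ_of a b) \<or> is_limit a" for a :: 'i
    unfolding is_succ_of_def is_limit_def by auto
  have mono: "c \<le> a \<Longrightarrow> pts (Ysp c) \<subseteq> pts (Ysp a)" if "a \<le> g" for a c
    using that
  proof (induction a arbitrary: c rule: less_induct)
    case (less a)
    show ?case
    proof (cases "c = a")
      case True then show ?thesis by simp
    next
      case False
      with less.prems have ca: "c < a" by auto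
      from trich[of a] show ?thesis
      proof (elim disjE)
        assume "\<not> (\<exists>b. b < a)" with ca show ?thesis by auto
      next
        assume "\<exists>b. is_succ_of a b"
        then obtain b where sb: "is_succ_of a b" by blast
        then have ba: "b < a" unfolding is_succ_of_def by auto
        have cb: "c \<le> b" using sb ca unfolding is_succ_of_def by (meson not_le)
        have "pts (Ysp c) \<subseteq> pts (Ysp b)" using less.IH[OF ba cb] ba less.prems by auto
        also have "\<dots> \<subseteq> pts (Ysp a)" using succ[OF less.prems(2) sb] unfolding attach_cell_def by auto
        finally show ?thesis .
      qed (use lim less.prems ca in auto)
    qed
  qed
  have intdisj: "cell_interior (n c) (Phi c) \<inter> pts (Ysp c) = {}" if "c < g" for c
    using att[OF that] unfolding attach_cell_def cell_interior_def by auto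
  have intin: "cell_interior (n b) (Phi b) \<subseteq> pts (Ysp a)" if "b < a" "a \<le> g" for a b
  proof -
    from att[of b] that obtain s where s: "s \<le> g" "is_succ_of s b"
      "attach_cell (Ysp b) (Ysp s) (n b) (phi b) (Phi b)" by force
    have "s \<le> a" using s(2) that unfolding is_succ_of_def by (meson not_le)
    have "cell_interior (n b) (Phi b) \<subseteq> pts (Ysp s)"
      using s(3) unfolding attach_cell_def cell_interior_def by auto
    also have "\<dots> \<subseteq> pts (Ysp a)" using mono[OF that(2) \<open>s \<le> a\<close>] .
    finally show ?thesis .
  qed
  have idisj: "cell_interior (n b) (Phi b) \<inter> cell_interior (n c) (Phi c) = {}"
    if "b < g" "c < g" "b \<noteq> c" for b c
  proof (cases "b < c")
    case True
    have "c \<le> g" using that by simp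
    then show ?thesis using intin[OF True] intdisj[of c] that by blast
  next
    case False
    then have "c < b" using that by auto
    moreover have "b \<le> g" using that by simp
    ultimately show ?thesis using intin[of c b] intdisj[of b] that by blast
  qed
  have Xsub: "pts X \<subseteq> pts (Ysp c)" if "c \<le> g" for c
  proof -
    define z where "z = (LEAST x::'i. True)"
    have "z \<le> c" unfolding z_def by (rule Least_le) simp
    have "\<not> (\<exists>b. b < z)" unfolding z_def using not_less_Least by blast
    with \<open>z \<le> c\<close> that have "Ysp z = X" using base by auto
    with mono[OF that \<open>z \<le> c\<close>] show ?thesis by simp
  qed
  show ?thesis
  proof (rule ccontr)
    define T where "T = {b. b < g \<and> C \<inter> cell_interior (n b) (Phi b) \<noteq> {}}"
    assume "infinite {b. b < g \<and> C \<inter> cell_interior (n b) (Phi b) \<noteq> {}}"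
    then have Tinf: "infinite T" unfolding T_def .
    define xs where "xs c = (SOME y. y \<in> C \<inter> cell_interior (n c) (Phi c))" for c
    have xs: "xs c \<in> C \<inter> cell_interior (n c) (Phi c)" if "c \<in> T" for c
      unfolding xs_def by (rule someI_ex) (use that T_def in auto)
    have Tg: "c \<in> T \<Longrightarrow> c < g" for c unfolding T_def by auto
    have xsT: "c \<in> T \<Longrightarrow> b < g \<Longrightarrow> xs c \<in> cell_interior (n b) (Phi b) \<Longrightarrow> c = b" for b c
    proof (rule ccontr)
      assume cT: "c \<in> T" and bg: "b < g" and xi: "xs c \<in> cell_interior (n b) (Phi b)" and "c \<noteq> b"
      then have "cell_interior (n c) (Phi c) \<inter> cell_interior (n b) (Phi b) = {}"
        using idisj[OF Tg[OF cT] bg] by blast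
      with xs[OF cT] xi show False by blast
    qed
    have "inj_on xs T"
    proof (rule inj_onI)
      fix b c assume bT: "b \<in> T" and cT: "c \<in> T" and e: "xs b = xs c"
      have "xs c \<in> cell_interior (n b) (Phi b)" using xs[OF bT] e by simp
      from xsT[OF cT Tg[OF bT] this] show "b = c" by simp
    qed
    define S where "S = xs ` T"
    have Sinf: "infinite S" unfolding S_def using Tinf \<open>inj_on xs T\<close> finite_imageD by blast
    have SC: "S \<subseteq> C" unfolding S_def using xs by auto
    define F0 where "F0 = inf cofinite (principal S)"
    have "F0 \<noteq> bot"
    proof
      assume "F0 = bot"
      then have "eventually (\<lambda>x. x \<in> S \<longrightarrow> False) cofinite"
        unfolding F0_def using eventually_inf_principal[of "\<lambda>_. False" cofinite S] by simp
      then have "finite S" by (simp add: eventually_cofinite)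
      with Sinf show False by simp
    qed
    from ex_ultra[OF this] obtain U where U: "is_ultrafilter U" "U \<le> F0" by blast
    have Ubot: "U \<noteq> bot" using U unfolding is_ultrafilter_def by auto
    have US: "eventually (\<lambda>z. z \<in> S) U"
    proof -
      have "F0 \<le> principal S" unfolding F0_def by (rule inf_le2)
      with U(2) have "U \<le> principal S" by (rule order_trans)
      then show ?thesis by (simp add: le_principal)
    qed
    have free: "eventually (\<lambda>z. z \<noteq> x) U" for x
    proof -
      have "eventually (\<lambda>z. z \<noteq> x) cofinite" by (simp add: eventually_cofinite)
      then have "eventually (\<lambda>z. z \<noteq> x) F0" unfolding F0_def by (rule eventually_inf_principal_imp_lemma)
      then show ?thesis using U(2) unfolding le_filter_def by auto
    qed
    have claim: "\<not> cv (Ysp a) U x" if "a \<le> g" for a x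
      using that
    proof (induction a arbitrary: x rule: less_induct)
      case (less a)
      from trich[of a] show ?case
      proof (elim disjE)
        assume "\<not> (\<exists>b. b < a)"
        then have "Ysp a = X" using base less.prems by auto
        show ?thesis
        proof
          assume "cv (Ysp a) U x"
          then have "eventually (\<lambda>z. z \<in> pts X) U" using psX \<open>Ysp a = X\<close> cv_pts by metis
          with US have "eventually (\<lambda>z. z \<in> pts X \<and> z \<in> S) U" by (simp add: eventually_conj_iff)
          from eventually_happens'[OF Ubot this] obtain z where z: "z \<in> pts X" "z \<in> S" by auto
          then obtain c where c: "c \<in> T" "z = xs c" unfolding S_def by auto
          have "z \<in> pts (Ysp c)" using Xsub[of c] Tg[OF c(1)] z(1) less_imp_le by blast
          moreover have "z \<in> cell_interior (n c) (Phi c)" using xs[OF c(1)] c by auto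
          ultimately show False using intdisj[OF Tg[OF c(1)]] by auto
        qed
      next
        assume "\<exists>b. is_succ_of a b"
        then obtain b where sb: "is_succ_of a b" by blast
        then have ba: "b < a" unfolding is_succ_of_def by auto
        with less.prems have bg: "b < g" by auto
        have A: "attach_cell (Ysp b) (Ysp a) (n b) (phi b) (Phi b)" using succ[OF less.prems sb] .
        show ?thesis
        proof
          assume cvA: "cv (Ysp a) U x"
          have "pseudotop (Ysp a)" using A unfolding attach_cell_def by simp
          with cvA have "eventually (\<lambda>z. z \<in> pts (Ysp a)) U" using cv_pts by metis
          with US free[of "xs b"]
          have ev: "eventually (\<lambda>z. z \<in> pts (Ysp a) \<and> z \<in> S \<and> z \<noteq> xs b) U"
            by (simp add: eventually_conj_iff)
          have "z \<in> pts (Ysp b)" if z: "z \<in> pts (Ysp a)" "z \<in> S" "z \<noteq> xs b" for z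
          proof -
            from A have pY: "pts (Ysp a) = pts (Ysp b) \<union> Phi b ` disc (n b)"
              and eqs: "\<forall>s \<in> bsphere (n b). Phi b s = phi b s"
              and cs: "cont (Sphere (n b)) (Ysp b) (phi b)"
              unfolding attach_cell_def by auto
            from cs have phS: "phi b ` bsphere (n b) \<subseteq> pts (Ysp b)"
              unfolding cont_def Sphere_def top_cspace_def pts_def by simp
            show ?thesis
            proof (rule ccontr)
              assume nz: "z \<notin> pts (Ysp b)"
              with z pY obtain w where w: "w \<in> disc (n b)" "z = Phi b w" by auto
              have "w \<notin> bsphere (n b)" using w eqs phS nz by auto
              then have zi: "z \<in> cell_interior (n b) (Phi b)" using w unfolding cell_interior_def by auto
              from z(2) obtain c where c: "c \<in> T" "z = xs c" unfolding S_def by auto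
              have "c = b" using xsT[OF c(1) bg] zi c by simp
              with c z(3) show False by simp
            qed
          qed
          with ev have "eventually (\<lambda>z. z \<in> pts (Ysp b)) U" by (auto elim: eventually_mono)
          from attach_step[OF A U(1) _ free this, of x] less.IH[OF ba] bg cvA
          show False by auto
        qed
      next
        assume la: "is_limit a"
        show ?thesis
        proof
          assume cvA: "cv (Ysp a) U x"
          from cvA[unfolded conjunct2[OF lim[OF less.prems la]] final_ps_def] U(1)
          have "U = principal {x} \<or> (\<exists>G. (\<exists>b<a. cv (Ysp b) G x) \<and> U \<le> G)" by auto
          then show False
          proof (elim disjE exE conjE)
            assume "U = principal {x}"
            with free[of x] show False by (simp add: eventually_principal)
          next
            fix G b assume "b < a" "cv (Ysp b) G x" "U \<le> G"
            moreover have "b < g" using \<open>b < a\<close> less.prems by auto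
            ultimately have "cv (Ysp b) U x" using ps[of b] Ubot cv_mono by metis
            with less.IH[OF \<open>b < a\<close> less_imp_le[OF \<open>b < g\<close>], of x] show False by simp
          qed
        qed
      qed
    qed
    have UC: "eventually (\<lambda>z. z \<in> C) U" using US SC by (auto elim: eventually_mono)
    from assms(2) UC U(1) have "\<exists>x\<in>C. cv Y U x"
      unfolding compact_sub_def by blast
    then obtain x where "cv (Ysp g) U x" using Yg by auto
    with claim[of g x] show False by simp
  qed
qed


end
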